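(* For every $\epsilon>0$ and every $\mathbf{x}=(x,y,z)\in\mathbb{R}^3\setminus N$, $$\frac{\partial R_\epsilon}{\partial z}(\mathbf{x})=0\iff z=0 .$$
   Context: Fix $\mu>0$, $\lambda>0$, $e\in(0,1)$ and set $a=\lambda^2/\mu$. For $\mathbf{x}=(x,y,z)\in\mathbb{R}^3$ with Euclidean norm $|\mathbf{x}|$ let $\nu(\mathbf{x})=\frac{\mu}{\lambda^2}\big(|\mathbf{x}|-\frac{x}{e}-\frac{\mathrm{i}y\sqrt{1-e^2}}{e}\big)\in\mathbb{C}$. $\sqrt{\cdot}$ denotes the principal branch of the complex square root (cut along $(-\infty,0]$). Let $N=\{0\}\cup\{\mathbf{x}: y=0,\ \nu(\mathbf{x})\in[0,4]\}$ (a closed Lebesgue-null set). For $\epsilon>0$ define on $\mathbb{R}^3\setminus N$ the real analytic function $$R_\epsilon(\mathbf{x})=\frac{\lambda}{\epsilon^2}\Big[\ln|\nu|+2\ln\big|1+\sqrt{1-4/\nu}\big|-\frac{\mu|\mathbf{x}|}{\lambda^2}+\tfrac12\operatorname{Re}\big(\nu(1-\sqrt{1-4/\nu})\big)\Big],$$ i.e. $R_\epsilon=\operatorname{Re}\log\psi_\epsilon$ for the limiting wave function $\psi_\epsilon=\nu^{\lambda/\epsilon^2}(1+\sqrt{1-4/\nu})^{2\lambda/\epsilon^2}\exp\big(-\frac{\mu|\mathbf{x}|}{\lambda\epsilon^2}+\frac{\lambda\nu}{2\epsilon^2}(1-\sqrt{1-4/\nu})\big)$. Put $R:=\epsilon^2R_\epsilon$,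 which is independent of $\epsilon$. *)

theory Defs
  imports "HOL-Analysis.Analysis"
begin

definition enorm3 :: "real \<Rightarrow> real \<Rightarrow> real \<Rightarrow> real" where
  "enorm3 x y z = sqrt (x^2 + y^2 + z^2)"

definition nu :: "real \<Rightarrow> real \<Rightarrow> real \<Rightarrow> real \<Rightarrow> real \<Rightarrow> real \<Rightarrow> complex" where
  "nu mu lam e x y z = complex_of_real (mu / lam^2) *
     (complex_of_real (enorm3 x y z) - complex_of_real (x / e)
      - \<i> * complex_of_real (y * sqrt (1 - e^2) / e))"

definition Nset :: "real \<Rightarrow> real \<Rightarrow> real \<Rightarrow> (real \<times> real \<times> real) set" where
  "Nset mu lam e = {(x,y,z). (x = 0 \<and> y = 0 \<and> z = 0) \<or>
      (y = 0 \<and> nu mu lam e x y z \<in> complex_of_real ` {0..4})}"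

definition R_eps :: "real \<Rightarrow> real \<Rightarrow> real \<Rightarrow> real \<Rightarrow> real \<Rightarrow> real \<Rightarrow> real \<Rightarrow> real" where
  "R_eps mu lam e eps x y z =
     (let v = nu mu lam e x y z in
      lam / eps^2 * (ln (cmod v) + 2 * ln (cmod (1 + csqrt (1 - 4 / v)))
        - mu * enorm3 x y z / lam^2 + (1/2) * Re (v * (1 - csqrt (1 - 4 / v)))))"

end

theory Submission
  imports Defs
begin

lemma Re_comp_deriv:
  assumes "(h has_field_derivative h') (at (of_real s))"
  shows "((\<lambda>s. Re (h (of_real s))) has_real_derivative Re h') (at s)"
  using bounded_linear.has_vector_derivative[OF bounded_linear_Re has_vector_derivative_real_field[OF assms]]
  by (simp add: has_real_derivative_iff_has_vector_derivative)

lemma hderiv: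
  fixes c a b s :: real
  defines "Q \<equiv> \<lambda>u. complex_of_real c * (u - of_real a - \<i> * of_real b)"
  assumes nz: "Q (of_real s) \<noteq> 0" and nr: "1 - 4 / Q (of_real s) \<notin> \<real>\<^sub>\<le>\<^sub>0"
  shows "((\<lambda>u. 2 * Ln (1 + csqrt (1 - 4 / Q u)) + (1/2) * (Q u * (1 - csqrt (1 - 4 / Q u))))
     has_field_derivative (of_real c * ((1 - csqrt (1 - 4 / Q (of_real s)))/2 - 1 / Q (of_real s)))) (at (of_real s))"
proof -
  define v where "v = Q (of_real s)"
  define w where "w = csqrt (1 - 4 / v)"
  have w2: "w^2 = 1 - 4/v" unfolding w_def by simp
  have wnz: "w \<noteq> 0" using nr unfolding w_def v_def by (auto simp: csqrt_eq_0)
  have rw0: "Re w \<ge> 0" unfolding w_def by (rule Re_csqrt)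
  have rew: "Re (1 + w) \<ge> 1" using rw0 by simp
  have pw: "1 + w \<notin> \<real>\<^sub>\<le>\<^sub>0" using rew by (auto simp: complex_nonpos_Reals_iff)
  have pwnz: "1 + w \<noteq> 0"
  proof
    assume "1 + w = 0" hence "Re (1 + w) = 0" by simp
    with rew show False by simp
  qed
  have dQ: "\<And>u. (Q has_field_derivative of_real c) (at u)"
    unfolding Q_def by (auto intro!: derivative_eq_intros)
  have dI: "((\<lambda>u. 1 - 4 / Q u) has_field_derivative (of_real c * (4 / v^2))) (at (of_real s))"
    using nz by (auto intro!: derivative_eq_intros dQ simp: v_def field_simps power2_eq_square)
  have dW: "((\<lambda>u. csqrt (1 - 4 / Q u)) has_field_derivative (of_real c * (4 / v^2) * inverse (2 * w))) (at (of_real s))"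
    using DERIV_chain2[where f=csqrt, OF has_field_derivative_csqrt dI] nr
    by (simp add: v_def w_def mult.commute)
  define Dw where "Dw = of_real c * (4 / v^2) * inverse (2 * w)"
  have dW1: "((\<lambda>u. 1 + csqrt (1 - 4 / Q u)) has_field_derivative Dw) (at (of_real s))"
    using DERIV_add[OF DERIV_const dW] unfolding Dw_def by simp
  have dL: "((\<lambda>u. Ln (1 + csqrt (1 - 4 / Q u))) has_field_derivative (inverse (1 + w) * Dw)) (at (of_real s))"
    using DERIV_chain2[where f=Ln, OF has_field_derivative_Ln dW1] pw by (simp add: v_def w_def)
  have dP: "((\<lambda>u. Q u * (1 - csqrt (1 - 4 / Q u))) has_field_derivative (v * (- Dw) + of_real c * (1 - w))) (at (of_real s))"
  proof -
    have "((\<lambda>u. Q u * (1 - csqrt (1 - 4 / Q u))) has_field_derivative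
       (of_real c * (1 - csqrt (1 - 4 / Q (of_real s))) + (0 - Dw) * Q (of_real s))) (at (of_real s))"
      by (rule DERIV_mult[OF dQ DERIV_diff[OF DERIV_const dW[folded Dw_def]]])
    thus ?thesis by (simp add: v_def w_def algebra_simps)
  qed
  have tot: "((\<lambda>u. 2 * Ln (1 + csqrt (1 - 4 / Q u)) + (1/2) * (Q u * (1 - csqrt (1 - 4 / Q u))))
     has_field_derivative (2 * (inverse (1 + w) * Dw) + (1/2) * (v * (- Dw) + of_real c * (1 - w)))) (at (of_real s))"
    by (rule DERIV_add[OF DERIV_cmult[OF dL] DERIV_cmult[OF dP]])
  have vnz: "v \<noteq> 0" using nz v_def by simp
  have inv1w: "inverse (1 + w) = v * (1 - w) / 4"
  proof -
    have "(1 + w) * (v * (1 - w) / 4) = 1" using w2 vnz by (simp add: field_simps power2_eq_square)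
    thus ?thesis by (metis inverse_unique)
  qed
  have eq: "2 * (inverse (1 + w) * Dw) + (1/2) * (v * (- Dw) + of_real c * (1 - w))
     = of_real c * ((1 - w)/2 - 1 / v)"
    unfolding inv1w Dw_def using vnz wnz by (simp add: field_simps power2_eq_square)
  show ?thesis using tot eq by (simp add: v_def w_def)
qed

theorem lemma5p1:
  fixes mu lam e eps x y z :: real
  assumes "mu > 0" and "lam > 0" and "0 < e" and "e < 1"
    and "eps > 0"
    and "(x, y, z) \<notin> Nset mu lam e"
  shows "deriv (\<lambda>t. R_eps mu lam e eps x y t) z = 0 \<longleftrightarrow> z = 0"
proof -
  note mu = assms(1) and lam = assms(2) and e0 = assms(3) and e1 = assms(4) and eps = assms(5)
  define c where "c = mu / lam^2"
  define a where "a = x / e"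
  define b where "b = y * sqrt (1 - e^2) / e"
  define K where "K = lam / eps^2"
  define Q where "Q = (\<lambda>u. complex_of_real c * (u - of_real a - \<i> * of_real b))"
  define h where "h = (\<lambda>u. 2 * Ln (1 + csqrt (1 - 4 / Q u)) + (1/2) * (Q u * (1 - csqrt (1 - 4 / Q u))))"
  define P where "P = (\<lambda>s. (c*(s-a))^2 + (c*b)^2)"
  define g where "g = (\<lambda>s. K * (ln (sqrt (P s)) + Re (h (of_real s)) - c * s))"
  have c0: "c > 0" unfolding c_def using mu lam by simp
  have K0: "K > 0" unfolding K_def using lam eps by simp
  have nuQ: "\<And>t. nu mu lam e x y t = Q (of_real (enorm3 x y t))"
    unfolding nu_def Q_def c_def a_def b_def by simp
  have ReQ: "\<And>s. Re (Q (of_real s)) = c*(s-a)" and ImQ: "\<And>s. Im (Q (of_real s)) = -(c*b)"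
    unfolding Q_def by simp_all
  have cmodQ: "\<And>s. cmod (Q (of_real s)) = sqrt (P s)"
    unfolding cmod_def ReQ ImQ P_def by simp
  have lnre: "\<And>q. ln (cmod (1 + csqrt q)) = Re (Ln (1 + csqrt q))"
  proof -
    fix q
    have "Re (csqrt q) \<ge> 0" by (rule Re_csqrt)
    have "1 + csqrt q \<noteq> 0"
    proof
      assume "1 + csqrt q = 0" hence "Re (1 + csqrt q) = Re 0" by (rule arg_cong)
      hence "1 + Re (csqrt q) = 0" by (simp only: plus_complex.sel one_complex.sel zero_complex.sel)
      with \<open>Re (csqrt q) \<ge> 0\<close> show False by linarith
    qed
    thus "ln (cmod (1 + csqrt q)) = Re (Ln (1 + csqrt q))" by simp
  qed
  have Rg: "(\<lambda>t. R_eps mu lam e eps x y t) = g \<circ> enorm3 x y"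
  proof
    fix t
    show "R_eps mu lam e eps x y t = (g \<circ> enorm3 x y) t"
      unfolding R_eps_def Let_def nuQ g_def h_def cmodQ lnre o_def
      by (simp add: K_def c_def)
  qed
  define s0 where "s0 = enorm3 x y z"
  define v where "v = Q (of_real s0)"
  define w where "w = csqrt (1 - 4 / v)"
  have notN: "\<not> ((x = 0 \<and> y = 0 \<and> z = 0) \<or> (y = 0 \<and> v \<in> complex_of_real ` {0..4}))"
    using assms(6) nuQ[of z] unfolding Nset_def v_def s0_def by auto
  have sq: "x^2 + y^2 + z^2 > 0"
  proof -
    have "x^2 \<ge> 0" "y^2 \<ge> 0" "z^2 \<ge> 0" by simp_all
    moreover have "x^2 > 0 \<or> y^2 > 0 \<or> z^2 > 0" using notN by auto
    ultimately show ?thesis by linarith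
  qed
  have s00: "s0 > 0" unfolding s0_def enorm3_def using sq by simp
  have Imv: "Im v = 0 \<Longrightarrow> y = 0"
  proof -
    assume "Im v = 0"
    hence "c * b = 0" unfolding v_def ImQ by simp
    hence "b = 0" using c0 by simp
    moreover have "sqrt (1 - e^2) > 0" using e0 e1 by (simp add: power_less_one_iff abs_less_iff)
    ultimately show "y = 0" unfolding b_def using e0 by simp
  qed
  have vnz: "v \<noteq> 0"
  proof
    assume "v = 0"
    hence "y = 0" using Imv by simp
    moreover have "v \<in> complex_of_real ` {0..4}" using \<open>v = 0\<close> by (auto intro: image_eqI[of _ _ 0])
    ultimately show False using notN by blast
  qed
  have nr: "1 - 4 / v \<notin> \<real>\<^sub>\<le>\<^sub>0"
  proof
    assume "1 - 4 / v \<in> \<real>\<^sub>\<le>\<^sub>0"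
    then obtain q where q: "1 - 4 / v = of_real q" "q \<le> 0" by (auto simp: nonpos_Reals_def)
    have "4 / v = of_real (1 - q)" using q by (simp add: algebra_simps)
    hence "v = of_real (4 / (1 - q))" using vnz q(2) by (simp add: field_simps)
    moreover have "4 / (1 - q) \<in> {0..4}" using q(2) by (auto simp: field_simps)
    ultimately have "v \<in> complex_of_real ` {0..4}" by blast
    moreover have "y = 0" using Imv \<open>v = of_real (4 / (1 - q))\<close> by simp
    ultimately show False using notN by blast
  qed
  have P0: "P s0 > 0"
  proof -
    have "cmod v > 0" using vnz by simp
    hence "sqrt (P s0) > 0" using cmodQ[of s0] unfolding v_def by simp
    thus ?thesis by simp
  qed
  have dlog: "((\<lambda>s. ln (sqrt (P s))) has_real_derivative (c*(c*(s0-a))/P s0)) (at s0)"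
    unfolding P_def using P0[unfolded P_def]
    by (auto intro!: derivative_eq_intros simp: field_simps power2_eq_square)
  have dh: "((\<lambda>s. Re (h (of_real s))) has_real_derivative Re (of_real c * ((1 - w)/2 - 1 / v))) (at s0)"
  proof -
    have hd: "(h has_field_derivative of_real c * ((1-w)/2 - 1/v)) (at (of_real s0))"
      unfolding h_def w_def v_def Q_def
      by (rule hderiv) (use vnz nr in \<open>simp_all add: v_def Q_def\<close>)
    show ?thesis by (rule Re_comp_deriv[OF hd])
  qed
  define D where "D = K * (c*(c*(s0-a))/P s0 + Re (of_real c * ((1 - w)/2 - 1 / v)) - c)"
  have dg: "(g has_real_derivative D) (at s0)"
    unfolding g_def D_def by (intro DERIV_cmult DERIV_diff DERIV_add dlog dh) (auto intro!: derivative_eq_intros)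
  have en: "enorm3 x y = (\<lambda>t. sqrt (x^2+y^2+t^2))" by (rule ext) (simp add: enorm3_def)
  have dr: "(enorm3 x y has_real_derivative z / s0) (at z)"
    unfolding en using sq by (auto intro!: derivative_eq_intros simp: s0_def enorm3_def field_simps)
  have dR: "((\<lambda>t. R_eps mu lam e eps x y t) has_real_derivative D * (z / s0)) (at z)"
    unfolding Rg using DERIV_chain[OF dg[unfolded s0_def] dr] .
  hence dv: "deriv (\<lambda>t. R_eps mu lam e eps x y t) z = D * (z / s0)" by (rule DERIV_imp_deriv)
  have hv: "Re (1 / v) = c*(s0-a) / P s0"
    unfolding v_def by (simp add: Re_divide ReQ ImQ P_def power2_eq_square)
  have Dv: "D = - (K * c * (1 + Re w) / 2)"
  proof -
    have re1: "Re (of_real c * ((1 - w)/2 - 1/v)) = c*((1 - Re w)/2 - Re(1/v))"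
      by (simp del: Re_divide)
    show ?thesis unfolding D_def re1 hv using P0 by (simp add: field_simps)
  qed
  have rw: "Re w \<ge> 0" unfolding w_def by (rule Re_csqrt)
  have Dnz: "D \<noteq> 0" unfolding Dv using K0 c0 rw by (simp add: add_nonneg_eq_0_iff)
  show ?thesis unfolding dv using Dnz s00 by simp
qed

end
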